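(* Let $m \in \mathbb{N}$ and $k \geq 4$ be integers. If $|q - q_k| < q_k^{-(m+1)k-3}$, then there is a sequence $(c_j)_{j\ge1} \in \{0,1\}^\mathbb{N}$ such that $\sum_{j\ge1} c_j q^{-j} = 1$ and $(c_j)_{j\ge1} = (1^{k-1}0)^m (c_j)_{j \ge mk+1}$, i.e. its first $mk$ digits are $m$ consecutive copies of the word $1^{k-1}0$.
   Context: $q_k$ is the unique root in $(1,2)$ of $x^k - x^{k-1} - \cdots - x - 1 = 0$. $1^{k-1}0$ denotes the word of $k-1$ ones followed by a zero, and $(w)^m$ denotes $m$ concatenated copies of $w$. *)

theory Defs
  imports Complex_Main
begin

definition qk :: "nat \<Rightarrow> real" where
  "qk k = (THE x. 1 < x \<and> x < 2 \<and> x ^ k = (\<Sum>i<k. x ^ i))"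

end

theory Submission
  imports Defs "HOL-Analysis.Analysis"
begin

lemma qk_unique:
  fixes x y :: real
  assumes k: "k \<ge> 1" and x: "1 < x" "x ^ k = (\<Sum>i<k. x ^ i)"
    and y: "1 < y" "y ^ k = (\<Sum>i<k. y ^ i)"
  shows "x = y"
proof -
  have conv: "(\<Sum>i<k. (1/z) ^ (k - i)) = 1" if "1 < z" "z ^ k = (\<Sum>i<k. z ^ i)" for z :: real
  proof -
    have "(\<Sum>i<k. (1/z) ^ (k - i)) = (\<Sum>i<k. z ^ i / z ^ k)"
    proof (rule sum.cong)
      fix i assume "i \<in> {..<k}"
      then have "z ^ k = z ^ i * z ^ (k - i)" by (simp add: power_add[symmetric])
      then show "(1/z) ^ (k - i) = z ^ i / z ^ k" using that by (simp add: power_one_over field_simps)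
    qed simp
    also have "\<dots> = (\<Sum>i<k. z ^ i) / z ^ k" by (simp add: sum_divide_distrib)
    also have "\<dots> = 1" using that by (simp only: that(2)[symmetric]) simp
    finally show ?thesis .
  qed
  have strict: "(\<Sum>i<k. (1/b) ^ (k - i)) < (\<Sum>i<k. (1/a) ^ (k - i))" if "1 < a" "a < b" for a b :: real
  proof (rule sum_strict_mono)
    have "0 \<in> {..<k}" using k by simp
    then show "{..<k} \<noteq> {}" by blast
    fix i assume "i \<in> {..<k}"
    then have "k - i > 0" by auto
    moreover have "1/b < 1/a" using that by (simp add: frac_less2)
    ultimately show "(1/b) ^ (k - i) < (1/a) ^ (k - i)"
      using that by (intro power_strict_mono) auto
  qed simp
  show ?thesis
  proof (rule ccontr)
    assume "x \<noteq> y"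
    then consider "x < y" | "y < x" by linarith
    then show False
      using strict[of x y] strict[of y x] conv[OF x] conv[OF y] x y by cases auto
  qed
qed

lemma qk_props:
  assumes k: "k \<ge> 4"
  shows "1.9 < qk k \<and> qk k < 2 \<and> qk k ^ k * (2 - qk k) = 1"
proof -
  define p where "p x = x ^ k * (x - 2) + 1" for x :: real
  have "(1.9::real) ^ 4 \<le> 1.9 ^ k" using k by (intro power_increasing) auto
  moreover have "(10::real) < 1.9 ^ 4" by (simp add: eval_nat_numeral)
  ultimately have "(10::real) < 1.9 ^ k" by linarith
  then have p19: "p 1.9 < 0" unfolding p_def by simp
  have p2: "p 2 = 1" unfolding p_def by simp
  have "continuous_on {1.9..2} p" unfolding p_def by (intro continuous_intros)
  then obtain x where x: "1.9 \<le> x" "x \<le> 2" "p x = 0"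
    using IVT'[of p "1.9" 0 2] p19 p2 by auto
  have "x \<noteq> 1.9"
  proof
    assume "x = 1.9" with x(3) p19 show False by simp
  qed
  moreover have "x \<noteq> 2" using x(3) p2 by auto
  ultimately have x1: "1.9 < x" "x < 2" using x by auto
  have eqx: "x ^ k * (2 - x) = 1" using x(3) unfolding p_def by (simp add: algebra_simps)
  have sx: "x ^ k = (\<Sum>i<k. x ^ i)"
  proof -
    have "(\<Sum>i<k. x ^ i) = (x ^ k - 1) / (x - 1)" using x1 by (intro geometric_sum) auto
    also have "\<dots> = x ^ k" using eqx x1 by (simp add: field_simps)
    finally show ?thesis by simp
  qed
  have P: "1 < x \<and> x < 2 \<and> x ^ k = (\<Sum>i<k. x ^ i)" using x1 sx by auto
  have "qk k = x" unfolding qk_def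
  proof (rule the_equality)
    show "1 < x \<and> x < 2 \<and> x ^ k = (\<Sum>i<k. x ^ i)" by (rule P)
    fix y :: real assume "1 < y \<and> y < 2 \<and> y ^ k = (\<Sum>i<k. y ^ i)"
    then show "y = x" using qk_unique[of k y x] P k by auto
  qed
  then show ?thesis using x1 eqx by simp
qed

fun gx :: "real \<Rightarrow> real \<Rightarrow> nat \<Rightarrow> real" where
  "gx q x 0 = x"
| "gx q x (Suc n) = q * gx q x n - (if 1 \<le> q * gx q x n then 1 else 0)"

lemma greedy:
  fixes q x :: real
  assumes q: "1 < q" "q \<le> 2" and x: "0 \<le> x" "x \<le> 1 / (q - 1)"
  shows "\<exists>d::nat\<Rightarrow>nat. (\<forall>n. d n \<in> {0, 1}) \<and> (\<lambda>n. real (d n) / q ^ (n + 1)) sums x"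
proof -
  define d where "d n = (if 1 \<le> q * gx q x n then 1 else 0::nat)" for n
  have inv: "0 \<le> gx q x n \<and> gx q x n \<le> 1 / (q - 1)" for n
  proof (induction n)
    case 0 then show ?case using x by simp
  next
    case (Suc n)
    let ?y = "gx q x n"
    have le1: "1 \<le> 1 / (q - 1)" using q by (simp add: field_simps)
    show ?case
    proof (cases "1 \<le> q * ?y")
      case True
      have "q * ?y \<le> q * (1 / (q - 1))" using Suc q by (intro mult_left_mono) auto
      also have "q * (1 / (q - 1)) = 1 + 1 / (q - 1)" using q by (simp add: field_simps)
      finally show ?thesis using True by simp
    next
      case False
      then have "q * ?y \<le> 1 / (q - 1)" using le1 by linarith
      then show ?thesis using False Suc q by auto
    qed
  qed
  have id: "(\<Sum>i<n. real (d i) / q ^ (i + 1)) = x - gx q x n / q ^ n" for n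
  proof (induction n)
    case 0 then show ?case by simp
  next
    case (Suc n)
    have "gx q x (Suc n) / q ^ Suc n = gx q x n / q ^ n - real (d n) / q ^ (n + 1)"
      using q by (simp add: d_def field_simps)
    then show ?case using Suc by simp
  qed
  have lim: "(\<lambda>n. gx q x n / q ^ n) \<longlonglongrightarrow> 0"
  proof (rule Lim_null_comparison)
    show "\<forall>\<^sub>F n in sequentially. norm (gx q x n / q ^ n) \<le> 1 / (q - 1) * (1 / q) ^ n"
    proof (intro always_eventually allI)
      fix n
      have "norm (gx q x n / q ^ n) = gx q x n * (1 / q) ^ n"
        using inv[of n] q by (simp add: power_one_over)
      also have "\<dots> \<le> 1 / (q - 1) * (1 / q) ^ n"
        using inv[of n] q by (intro mult_right_mono) auto
      finally show "norm (gx q x n / q ^ n) \<le> 1 / (q - 1) * (1 / q) ^ n" .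
    qed
    show "(\<lambda>n. 1 / (q - 1) * (1 / q) ^ n) \<longlonglongrightarrow> 0"
      using q by (intro tendsto_mult_right_zero LIMSEQ_power_zero) auto
  qed
  have "(\<lambda>n. x - gx q x n / q ^ n) \<longlonglongrightarrow> x - 0"
    by (intro tendsto_diff tendsto_const lim)
  then have "(\<lambda>n. real (d n) / q ^ (n + 1)) sums x"
    unfolding sums_def id by simp
  moreover have "\<forall>n. d n \<in> {0, 1}" by (simp add: d_def)
  ultimately show ?thesis by blast
qed

lemma pow_upper:
  fixes e :: real
  assumes "0 \<le> e" "real n * e \<le> 1/2"
  shows "(1 + e) ^ n \<le> 1 + 2 * real n * e"
  using assms
proof (induction n)
  case 0 then show ?case by simp
next
  case (Suc n)
  have ne: "real n * e \<le> 1/2" using Suc.prems by (simp add: algebra_simps)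
  have "(1 + e) ^ Suc n = (1 + e) * (1 + e) ^ n" by simp
  also have "\<dots> \<le> (1 + e) * (1 + 2 * real n * e)"
    using Suc.IH[OF Suc.prems(1) ne] Suc.prems by (intro mult_left_mono) auto
  also have "\<dots> = 1 + (2 * real n + 1) * e + 2 * (real n * e) * e" by (simp add: algebra_simps)
  also have "\<dots> \<le> 1 + (2 * real n + 1) * e + e"
  proof -
    have "2 * (real n * e) * e \<le> 2 * (1/2) * e" using ne Suc.prems by (intro mult_right_mono) auto
    then show ?thesis by simp
  qed
  also have "\<dots> = 1 + 2 * real (Suc n) * e" by (simp add: algebra_simps)
  finally show ?case .
qed

lemma hderiv_bound:
  fixes z A M :: real and k :: nat
  assumes k: "k \<ge> 4" and z: "2 - 2 * A \<le> z" "z \<le> 2" "0 \<le> z" "z \<le> M"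
    and A: "real (k + 1) * A \<le> 2"
  shows "\<bar>real (k + 1) * z ^ k - 2 * (real k * z ^ (k - 1))\<bar> \<le> 2 * M ^ (k - 1)"
proof -
  have zk: "z ^ k = z * z ^ (k - 1)" using k by (cases k) auto
  have eq: "real (k + 1) * z ^ k - 2 * (real k * z ^ (k - 1)) = z ^ (k - 1) * (real (k + 1) * z - 2 * real k)"
    by (simp add: zk algebra_simps)
  have up: "real (k + 1) * z - 2 * real k \<le> 2"
  proof -
    have "real (k + 1) * z \<le> real (k + 1) * 2" using z by (intro mult_left_mono) auto
    then show ?thesis by simp
  qed
  have lo: "real (k + 1) * z - 2 * real k \<ge> -2"
  proof -
    have "real (k + 1) * (2 - 2 * A) \<le> real (k + 1) * z" using z by (intro mult_left_mono) auto
    then show ?thesis using A by (simp add: algebra_simps)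
  qed
  have "\<bar>real (k + 1) * z ^ k - 2 * (real k * z ^ (k - 1))\<bar> = z ^ (k - 1) * \<bar>real (k + 1) * z - 2 * real k\<bar>"
    unfolding eq using z by (simp add: abs_mult)
  also have "\<dots> \<le> M ^ (k - 1) * 2"
    using up lo z by (intro mult_mono power_mono) auto
  finally show ?thesis by simp
qed

lemma key:
  fixes q Q :: real and m k :: nat
  assumes k: "k \<ge> 4" and Q: "1.9 < Q" "Q < 2" "Q ^ k * (2 - Q) = 1"
    and d: "\<bar>q - Q\<bar> < 1 / Q ^ ((m + 1) * k + 3)"
  shows "1.8 < q \<and> q < 2 \<and> \<bar>q ^ (k + 1) - 2 * q ^ k + 1\<bar> * q ^ (m * k) \<le> (2 - q) * (q ^ k - 1)"
proof -
  define n where "n = m * k + k - 1"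
  have nE: "(m + 1) * k + 3 = n + 4" using k by (simp add: n_def algebra_simps)
  define eps where "eps = 1 / Q ^ (n + 4)"
  define A where "A = 1 / Q ^ k"
  have Qpos: "0 < Q" using Q by simp
  have Q4: "13 \<le> Q ^ 4"
  proof -
    have "(1.9::real) ^ 4 \<le> Q ^ 4" using Q by (intro power_mono) auto
    moreover have "(13::real) \<le> 1.9 ^ 4" by (simp add: eval_nat_numeral)
    ultimately show ?thesis by linarith
  qed
  have Q3: "6.8 \<le> Q ^ 3"
  proof -
    have "(1.9::real) ^ 3 \<le> Q ^ 3" using Q by (intro power_mono) auto
    moreover have "(6.8::real) \<le> 1.9 ^ 3" by (simp add: eval_nat_numeral)
    ultimately show ?thesis by linarith
  qed
  have Q5: "24 \<le> Q ^ 5"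
  proof -
    have "(1.9::real) ^ 5 \<le> Q ^ 5" using Q by (intro power_mono) auto
    moreover have "(24::real) \<le> 1.9 ^ 5" by (simp add: eval_nat_numeral)
    ultimately show ?thesis by linarith
  qed
  have Qk: "13 \<le> Q ^ k"
  proof -
    have "Q ^ 4 \<le> Q ^ k" using Q k by (intro power_increasing) auto
    then show ?thesis using Q4 by linarith
  qed
  have bern: "0.9 * real j \<le> Q ^ j" for j
  proof -
    have "1 + real j * (Q - 1) \<le> (1 + (Q - 1)) ^ j" using Q by (intro Bernoulli_inequality) auto
    moreover have "real j * 0.9 \<le> real j * (Q - 1)" using Q by (intro mult_left_mono) auto
    ultimately show ?thesis by (simp add: mult.commute)
  qed
  have jQ: "real j / Q ^ j \<le> 10 / 9" for j
  proof -
    have "0 < Q ^ j" using Qpos by simp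
    then show ?thesis using bern[of j] by (simp add: field_simps)
  qed
  have twoQ: "2 - Q = A" unfolding A_def using Q(3) Qpos by (simp add: field_simps)
  have Apos: "0 < A" unfolding A_def using Qpos by simp
  have A13: "A \<le> 1 / 13" unfolding A_def using Qk by (simp add: field_simps)
  have eps_pos: "0 < eps" unfolding eps_def using Qpos by simp
  have eps_le: "eps \<le> A / Q ^ 3"
  proof -
    have "Q ^ (k + 3) \<le> Q ^ (n + 4)" using Q by (intro power_increasing) (auto simp: n_def)
    then have "1 / Q ^ (n + 4) \<le> 1 / Q ^ (k + 3)" using Qpos by (intro divide_left_mono) auto
    then show ?thesis unfolding eps_def A_def by (simp add: power_add)
  qed
  have eps_A: "eps * 6.8 \<le> A"
  proof -
    have "eps * 6.8 \<le> eps * Q ^ 3" using eps_pos Q3 by (intro mult_left_mono) auto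
    also have "\<dots> \<le> A" using eps_le Qpos by (simp add: field_simps)
    finally show ?thesis .
  qed
  have dq: "\<bar>q - Q\<bar> < eps" using d unfolding eps_def nE .
  have q2: "q < 2" using dq eps_A Apos twoQ by linarith
  have q18: "1.8 < q" using dq eps_A A13 Q by linarith
  define M where "M = Q + eps"
  have qM: "q \<le> M" using dq M_def by linarith
  define h where "h x = x ^ (k + 1) - 2 * x ^ k + 1" for x :: real
  define h' where "h' x = real (k + 1) * x ^ k - 2 * (real k * x ^ (k - 1))" for x :: real
  have hQ: "h Q = 0" using Q(3) unfolding h_def by (simp add: algebra_simps)
  have Ak: "real (k + 1) * A \<le> 2"
  proof -
    have "real (k + 1) \<le> 2 * Q ^ k" using bern[of k] k by simp
    then show ?thesis unfolding A_def using Qpos by (simp add: field_simps)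
  qed
  have hd: "\<bar>h' z\<bar> \<le> 2 * M ^ (k - 1)" if "Q - eps \<le> z" "z \<le> Q + eps" for z
    unfolding h'_def
  proof (rule hderiv_bound[OF k _ _ _ _ Ak])
    show "2 - 2 * A \<le> z" using that twoQ eps_A Apos by linarith
    show "z \<le> 2" using that twoQ eps_A Apos by linarith
    show "0 \<le> z" using that eps_A A13 Q by linarith
    show "z \<le> M" using that M_def by simp
  qed
  have pk: "x * x ^ (k - Suc 0) = x ^ k" for x :: real using k by (cases k) auto
  have DER: "DERIV h x :> h' x" for x
    unfolding h_def h'_def by (auto intro!: derivative_eq_intros simp: algebra_simps pk)
  have hq: "\<bar>h q\<bar> \<le> \<bar>q - Q\<bar> * (2 * M ^ (k - 1))"
  proof (cases "q = Q")
    case True then show ?thesis using hQ by simp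
  next
    case False
    define a where "a = min q Q"
    define b where "b = max q Q"
    have ab: "a < b" using False by (auto simp: a_def b_def)
    obtain z where z: "a < z" "z < b" "h b - h a = (b - a) * h' z"
      using MVT2[OF ab DER] by blast
    have zr: "Q - eps \<le> z" "z \<le> Q + eps" using z dq by (auto simp: a_def b_def)
    have "\<bar>h q\<bar> = \<bar>h b - h a\<bar>" using hQ by (auto simp: a_def b_def min_def max_def)
    also have "\<dots> = \<bar>q - Q\<bar> * \<bar>h' z\<bar>" using z(3) by (auto simp: a_def b_def min_def max_def abs_mult)
    also have "\<dots> \<le> \<bar>q - Q\<bar> * (2 * M ^ (k - 1))" using hd[OF zr] by (intro mult_left_mono) auto
    finally show ?thesis .
  qed
  define eta where "eta = eps / Q"
  have eta_pos: "0 < eta" unfolding eta_def using eps_pos Qpos by simp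
  have MQ: "M = Q * (1 + eta)" unfolding M_def eta_def using Qpos by (simp add: field_simps)
  have neta: "real n * eta \<le> 1 / 20"
  proof -
    have "real n * eta = (real n / Q ^ n) / Q ^ 5"
      unfolding eta_def eps_def using Qpos by (simp add: power_add field_simps eval_nat_numeral)
    also have "\<dots> \<le> (10 / 9) / 24" by (rule frac_le[OF _ jQ[of n] _ Q5]) auto
    finally show ?thesis by simp
  qed
  have pw: "(1 + eta) ^ n \<le> 11 / 10"
  proof -
    have "(1 + eta) ^ n \<le> 1 + 2 * real n * eta" using eta_pos neta by (intro pow_upper) auto
    then show ?thesis using neta by simp
  qed
  have lhs: "\<bar>h q\<bar> * q ^ (m * k) \<le> 2.2 / Q ^ 4"
  proof -
    have q0: "0 \<le> q" using q18 by simp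
    have M0: "0 \<le> M" using M_def eps_pos Q by simp
    have h1: "\<bar>h q\<bar> \<le> eps * (2 * M ^ (k - 1))"
    proof -
      have "\<bar>q - Q\<bar> * (2 * M ^ (k - 1)) \<le> eps * (2 * M ^ (k - 1))"
        using dq M0 by (intro mult_right_mono) auto
      then show ?thesis using hq by linarith
    qed
    have "\<bar>h q\<bar> * q ^ (m * k) \<le> (eps * (2 * M ^ (k - 1))) * M ^ (m * k)"
    proof (rule mult_mono)
      show "q ^ (m * k) \<le> M ^ (m * k)" using q0 qM by (intro power_mono) auto
    qed (use h1 eps_pos M0 q0 in auto)
    also have "\<dots> = 2 * eps * (M ^ (k - 1) * M ^ (m * k))" by (simp only: mult_ac)
    also have "M ^ (k - 1) * M ^ (m * k) = M ^ n"
    proof -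
      have "k - 1 + m * k = n" using k by (simp add: n_def)
      then show ?thesis by (metis power_add)
    qed
    also have "M ^ n = Q ^ n * (1 + eta) ^ n" unfolding MQ by (simp only: power_mult_distrib)
    also have "2 * eps * (Q ^ n * (1 + eta) ^ n) = 2 * (1 + eta) ^ n / Q ^ 4"
    proof -
      have "eps = 1 / (Q ^ n * Q ^ 4)" unfolding eps_def by (simp only: power_add)
      then show ?thesis using Qpos by simp
    qed
    also have "\<dots> \<le> 2 * (11 / 10) / Q ^ 4"
      using pw Qpos by (intro divide_right_mono) auto
    finally show ?thesis by simp
  qed
  have lhs2: "2.2 / Q ^ 4 \<le> (17/100)"
  proof -
    have "2.2 / Q ^ 4 \<le> 2.2 / 13" using Q4 by (intro divide_left_mono) auto
    then show ?thesis by simp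
  qed
  have r1: "2 - q \<ge> (85/100) * A" using dq eps_A twoQ by linarith
  have keta: "real k * eta \<le> 1 / 10"
  proof -
    have "eta \<le> A / Q ^ 4" unfolding eta_def using eps_le Qpos
      by (simp add: field_simps power_Suc2 eval_nat_numeral)
    then have "real k * eta \<le> real k * (A / Q ^ 4)" by (intro mult_left_mono) auto
    also have "\<dots> = (real k / Q ^ k) / Q ^ 4" unfolding A_def by simp
    also have "\<dots> \<le> (10 / 9) / 13" by (rule frac_le[OF _ jQ[of k] _ Q4]) auto
    finally show ?thesis by simp
  qed
  have qk: "q ^ k \<ge> 0.9 * Q ^ k"
  proof -
    have e1: "Q - eps \<le> q" using dq by linarith
    have e2: "Q - eps = Q * (1 + (- eta))" unfolding eta_def using Qpos by (simp add: field_simps)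
    have e3: "0 \<le> Q - eps" using eps_A A13 Q by linarith
    have e4: "(Q - eps) ^ k \<le> q ^ k" using e1 e3 by (intro power_mono) auto
    have e5: "(Q - eps) ^ k = Q ^ k * (1 + (- eta)) ^ k" unfolding e2 by (simp only: power_mult_distrib)
    have "1 * eta \<le> real k * eta" using k eta_pos by (intro mult_right_mono) auto
    then have e0: "eta \<le> 1" using keta by simp
    have e6: "1 + real k * (- eta) \<le> (1 + (- eta)) ^ k"
      using e0 by (intro Bernoulli_inequality) (auto simp: algebra_simps)
    have e7: "0.9 \<le> (1 + (- eta)) ^ k" using keta e6 by simp
    have "Q ^ k * 0.9 \<le> Q ^ k * (1 + (- eta)) ^ k" using e7 Qpos by (intro mult_left_mono) auto
    then show ?thesis using e4 e5 by simp
  qed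
  have r2: "q ^ k - 1 \<ge> (82/100) * Q ^ k"
  proof -
    have "1 \<le> Q ^ k / 13" using Qk by simp
    then show ?thesis using qk by linarith
  qed
  have rhs: "(2 - q) * (q ^ k - 1) \<ge> (69/100)"
  proof -
    have "((85/100) * A) * ((82/100) * Q ^ k) \<le> (2 - q) * (q ^ k - 1)"
      using r1 r2 Apos Qpos by (intro mult_mono) auto
    moreover have "((85/100) * A) * ((82/100) * Q ^ k) = (85/100) * (82/100)"
      unfolding A_def using Qpos by simp
    ultimately show ?thesis by simp
  qed
  show ?thesis using q18 q2 lhs lhs2 rhs unfolding h_def by linarith
qed

lemma sum_split_add: "(\<Sum>i<a + (b::nat). (f i :: real)) = (\<Sum>i<a. f i) + (\<Sum>t<b. f (a + t))"
  by (induction b) (auto simp: add.assoc)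

theorem lemma3p4:
  fixes m k :: nat and q :: real
  assumes "k \<ge> 4"
    and "\<bar>q - qk k\<bar> < 1 / qk k ^ ((m + 1) * k + 3)"
  shows "\<exists>c :: nat \<Rightarrow> nat.
           (\<forall>j\<ge>1. c j \<in> {0, 1}) \<and>
           (\<lambda>j. real (c (j + 1)) / q ^ (j + 1)) sums 1 \<and>
           (\<forall>j. 1 \<le> j \<and> j \<le> m * k \<longrightarrow> c j = (if k dvd j then 0 else 1))"
proof -
  have k: "k \<ge> 4" by fact
  have QP: "1.9 < qk k \<and> qk k < 2 \<and> qk k ^ k * (2 - qk k) = 1" using qk_props[OF k] .
  have KY: "1.8 < q \<and> q < 2 \<and> \<bar>q ^ (k + 1) - 2 * q ^ k + 1\<bar> * q ^ (m * k) \<le> (2 - q) * (q ^ k - 1)"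
    using key[of k "qk k" q m] QP k assms(2) by blast
  have q18: "1.8 < q" and q2: "q < 2" and KI: "\<bar>q ^ (k + 1) - 2 * q ^ k + 1\<bar> * q ^ (m * k) \<le> (2 - q) * (q ^ k - 1)"
    using KY by auto
  have qpos: "0 < q" using q18 by simp
  define w where "w i = real (if k dvd (i + 1) then 0 else 1::nat) / q ^ (i + 1)" for i
  define P where "P j = (\<Sum>i<j * k. w i)" for j
  define r where "r j = q ^ (j * k) * (1 - P j)" for j
  define G where "G = (\<Sum>i<k. q ^ i) - q ^ k"
  have kS: "k = Suc (k - 1)" using k by simp
  have block: "(\<Sum>t<k. w (j * k + t)) = (\<Sum>t<k - 1. 1 / q ^ (j * k + t + 1))" for j
  proof -
    have "(\<Sum>t<k. w (j * k + t)) = (\<Sum>t<k - 1. w (j * k + t)) + w (j * k + (k - 1))"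
      by (subst kS) (simp only: sum.lessThan_Suc diff_Suc_1)
    also have "w (j * k + (k - 1)) = 0"
    proof -
      have "j * k + (k - 1) + 1 = k * (j + 1)" using k by (simp add: algebra_simps)
      then show ?thesis unfolding w_def by simp
    qed
    also have "(\<Sum>t<k - 1. w (j * k + t)) = (\<Sum>t<k - 1. 1 / q ^ (j * k + t + 1))"
    proof (rule sum.cong)
      fix t assume t: "t \<in> {..<k - 1}"
      have "\<not> k dvd (t + 1)" using t by (intro nat_dvd_not_less) auto
      then have "\<not> k dvd (j * k + t + 1)"
        by (metis add.assoc dvd_add_right_iff dvd_triv_right)
      then show "w (j * k + t) = 1 / q ^ (j * k + t + 1)" unfolding w_def by (simp add: add.assoc)
    qed simp
    finally show ?thesis by simp
  qed
  have shiftsum: "q ^ (j * k + k) * (\<Sum>t<k - 1. 1 / q ^ (j * k + t + 1)) = (\<Sum>i<k. q ^ i) - 1" for j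
  proof -
    have "q ^ (j * k + k) * (\<Sum>t<k - 1. 1 / q ^ (j * k + t + 1)) = (\<Sum>t<k - 1. q ^ (k - 1 - t))"
      unfolding sum_distrib_left
    proof (rule sum.cong)
      fix t assume t: "t \<in> {..<k - 1}"
      have e: "j * k + k = (j * k + t + 1) + (k - 1 - t)" using t by auto
      then have "q ^ (j * k + k) = q ^ (j * k + t + 1) * q ^ (k - 1 - t)" by (metis power_add)
      then show "q ^ (j * k + k) * (1 / q ^ (j * k + t + 1)) = q ^ (k - 1 - t)" using qpos by simp
    qed simp
    also have "\<dots> = (\<Sum>t<k - 1. q ^ Suc (k - 1 - Suc t))"
    proof (rule sum.cong)
      fix t assume "t \<in> {..<k - 1}"
      then have "k - 1 - t = Suc (k - 1 - Suc t)" by auto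
      then show "q ^ (k - 1 - t) = q ^ Suc (k - 1 - Suc t)" by (simp only:)
    qed simp
    also have "\<dots> = (\<Sum>t<k - 1. q ^ Suc t)"
      by (rule sum.nat_diff_reindex[where g = "\<lambda>t. q ^ Suc t"])
    also have "\<dots> = (\<Sum>i<k. q ^ i) - 1"
    proof -
      have "(\<Sum>i<k. q ^ i) = (\<Sum>i<Suc (k - 1). q ^ i)" using kS by simp
      also have "\<dots> = q ^ 0 + (\<Sum>i<k - 1. q ^ Suc i)" by (rule sum.lessThan_Suc_shift)
      finally show ?thesis by simp
    qed
    finally show ?thesis .
  qed
  have rec: "r (Suc j) = q ^ k * r j - ((\<Sum>i<k. q ^ i) - 1)" for j
  proof -
    have "P (Suc j) = P j + (\<Sum>t<k - 1. 1 / q ^ (j * k + t + 1))"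
    proof -
      have "Suc j * k = j * k + k" by simp
      then have "P (Suc j) = (\<Sum>i<j * k + k. w i)" unfolding P_def by metis
      also have "\<dots> = P j + (\<Sum>t<k. w (j * k + t))" unfolding P_def by (rule sum_split_add)
      finally show ?thesis using block[of j] by simp
    qed
    then have "r (Suc j) = q ^ (j * k + k) * (1 - P j) - q ^ (j * k + k) * (\<Sum>t<k - 1. 1 / q ^ (j * k + t + 1))"
      unfolding r_def by (simp add: algebra_simps)
    also have "q ^ (j * k + k) * (1 - P j) = q ^ k * r j" unfolding r_def by (simp add: power_add)
    finally show ?thesis using shiftsum[of j] by simp
  qed
  have closed: "(r j - 1) * (q ^ k - 1) = - G * (q ^ (j * k) - 1)" for j
  proof (induction j)
    case 0 then show ?case by (simp add: r_def P_def)
  next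
    case (Suc j)
    have "(r (Suc j) - 1) * (q ^ k - 1) = q ^ k * ((r j - 1) * (q ^ k - 1)) - G * (q ^ k - 1)"
      unfolding rec G_def by (simp add: algebra_simps)
    also have "\<dots> = - G * (q ^ (Suc j * k) - 1)" unfolding Suc
      by (simp add: algebra_simps power_add)
    finally show ?case .
  qed
  have Gh: "G * (q - 1) = - (q ^ (k + 1) - 2 * q ^ k + 1)"
  proof -
    have "(\<Sum>i<k. q ^ i) = (q ^ k - 1) / (q - 1)" using q18 by (intro geometric_sum) auto
    then have "(\<Sum>i<k. q ^ i) * (q - 1) = q ^ k - 1" using q18 by simp
    then show ?thesis unfolding G_def by (simp add: algebra_simps)
  qed
  have qk1: "0 < q ^ k - 1"
  proof -
    have "1 < q ^ k" using q18 k by (intro one_less_power) auto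
    then show ?thesis by simp
  qed
  have bnd: "\<bar>r m - 1\<bar> * (q - 1) \<le> 2 - q"
  proof -
    have "\<bar>r m - 1\<bar> * (q ^ k - 1) * (q - 1) = \<bar>G\<bar> * (q - 1) * (q ^ (m * k) - 1)"
    proof -
      have "\<bar>r m - 1\<bar> * (q ^ k - 1) = \<bar>G\<bar> * \<bar>q ^ (m * k) - 1\<bar>"
        using closed[of m] qk1 by (metis abs_minus_cancel abs_mult abs_of_pos)
      moreover have "\<bar>q ^ (m * k) - 1\<bar> = q ^ (m * k) - 1" using q18 by (simp add: one_le_power)
      ultimately have e: "\<bar>r m - 1\<bar> * (q ^ k - 1) = \<bar>G\<bar> * (q ^ (m * k) - 1)" by simp
      have "\<bar>r m - 1\<bar> * (q ^ k - 1) * (q - 1) = \<bar>G\<bar> * (q ^ (m * k) - 1) * (q - 1)" by (simp only: e)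
      also have "\<dots> = \<bar>G\<bar> * (q - 1) * (q ^ (m * k) - 1)" by (simp only: mult_ac)
      finally show ?thesis .
    qed
    also have "\<dots> \<le> \<bar>G\<bar> * (q - 1) * q ^ (m * k)"
      using q18 by (intro mult_left_mono) auto
    also have "\<bar>G\<bar> * (q - 1) = \<bar>q ^ (k + 1) - 2 * q ^ k + 1\<bar>"
    proof -
      have "\<bar>G\<bar> * (q - 1) = \<bar>G * (q - 1)\<bar>" using q18 by (simp add: abs_mult)
      then show ?thesis unfolding Gh by simp
    qed
    finally have "\<bar>r m - 1\<bar> * (q - 1) * (q ^ k - 1) \<le> (2 - q) * (q ^ k - 1)"
      using KI by (simp add: algebra_simps)
    then show ?thesis using qk1 by simp
  qed
  have r0: "0 \<le> r m"
  proof -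
    have "\<bar>r m - 1\<bar> * (q - 1) \<le> 1 * (q - 1)"
    proof -
      have "2 - q \<le> 1 * (q - 1)" using q18 by simp
      with bnd show ?thesis by (rule order_trans)
    qed
    then have "\<bar>r m - 1\<bar> \<le> 1" by (rule mult_right_le_imp_le) (use q18 in simp)
    then show ?thesis by simp
  qed
  have r1: "r m \<le> 1 / (q - 1)"
  proof -
    have a1: "(r m - 1) * (q - 1) \<le> \<bar>r m - 1\<bar> * (q - 1)" by (intro mult_right_mono) (use q18 in auto)
    have a2: "r m * (q - 1) = (r m - 1) * (q - 1) + (q - 1)" by (simp add: algebra_simps)
    have "r m * (q - 1) \<le> 1" using a1 a2 bnd by linarith
    then show ?thesis using q18 by (simp add: field_simps)
  qed
  obtain d :: "nat \<Rightarrow> nat" where d01: "\<forall>n. d n \<in> {0, 1}" and dsum: "(\<lambda>n. real (d n) / q ^ (n + 1)) sums r m"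
    using greedy[of q "r m"] q18 q2 r0 r1 by auto
  define c where "c j = (if j \<le> m * k then (if k dvd j then 0 else 1) else d (j - m * k - 1))" for j
  define f where "f j = real (c (j + 1)) / q ^ (j + 1)" for j
  have "(\<lambda>n. real (d n) / q ^ (n + 1) / q ^ (m * k)) sums (r m / q ^ (m * k))"
    by (intro sums_divide dsum)
  moreover have "(\<lambda>n. real (d n) / q ^ (n + 1) / q ^ (m * k)) = (\<lambda>i. f (i + m * k))"
  proof
    fix i
    have "c (i + m * k + 1) = d i" unfolding c_def by simp
    then show "real (d i) / q ^ (i + 1) / q ^ (m * k) = f (i + m * k)"
      unfolding f_def by (simp add: power_add algebra_simps)
  qed
  ultimately have "f sums (r m / q ^ (m * k) + (\<Sum>i<m * k. f i))"
    using sums_iff_shift by metis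
  moreover have "(\<Sum>i<m * k. f i) = P m"
    unfolding P_def
  proof (rule sum.cong)
    fix i assume "i \<in> {..<m * k}"
    then show "f i = w i" unfolding f_def w_def c_def by auto
  qed simp
  moreover have "r m / q ^ (m * k) + P m = 1" unfolding r_def using qpos by simp
  ultimately have "f sums 1" by simp
  moreover have "\<forall>j\<ge>1. c j \<in> {0, 1}" unfolding c_def using d01 by auto
  moreover have "\<forall>j. 1 \<le> j \<and> j \<le> m * k \<longrightarrow> c j = (if k dvd j then 0 else 1)"
    unfolding c_def by auto
  ultimately show ?thesis unfolding f_def by blast
qed

end
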